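(* Let $A$ be a finite set, $C \subseteq O_A$ a total clone containing the constant function $c_a$ for some $a\in A$, and $X \in \mathcal{I}_{\mathrm{str}}(C)$. Then for every partial function $f$ on $A$: $f \in X$ if and only if $f_a \in X$.
   Context: A partial function of arity $n$ on $A$ is a map $f:\operatorname{dom} f\to A$ with $\operatorname{dom} f\subseteq A^n$; total if $\operatorname{dom} f=A^n$. $P_A$, $O_A$ denote the sets of partial, resp. total, functions. Composition $F=f(g_1,\dots,g_n)$ is given by $F(\mathbf{x})=f(g_1(\mathbf{x}),\dots,g_n(\mathbf{x}))$ on $\operatorname{dom} F=\{\mathbf{x}\in\bigcap_i\operatorname{dom} g_i : (g_1(\mathbf{x}),\dots,g_n(\mathbf{x}))\in\operatorname{dom} f\}$. A partial clone is a composition-closed subset of $P_A$ containing all projections; a total clone is one contained in $O_A$; a partial clone is strong if it contains all restrictions of its members. $\mathcal{I}_{\mathrm{str}}(C)$ is the set of strong partial clones $X$ with $X\cap O_A=C$. For an $n$-ary partial $f$ and $a\in A$, $f_a$ is the $(n+1)$-ary partial function with $\operatorname{dom} f_a=\{(a,\mathbf{x}):\mathbf{x}\in\operatorname{dom} f\}$ and $f_a(a,\mathbf{x})=f(\mathbf{x})$. *)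

theory Defs
  imports Main
begin

text \<open>A partial function on A of arity n is represented as a pair (n, g) where
  g :: 'a list => 'a option; its domain is the set of lists where g is defined,
  which must consist of lists of length n over A; values lie in A.\<close>

type_synonym 'a pfun = "nat \<times> ('a list \<Rightarrow> 'a option)"

definition arity :: "'a pfun \<Rightarrow> nat" where "arity f = fst f"
definition pdom :: "'a pfun \<Rightarrow> 'a list set" where "pdom f = {xs. snd f xs \<noteq> None}"

definition tuples :: "'a set \<Rightarrow> nat \<Rightarrow> 'a list set" where
  "tuples A n = {xs. length xs = n \<and> set xs \<subseteq> A}"

definition is_pfun :: "'a set \<Rightarrow> 'a pfun \<Rightarrow> bool" where
  "is_pfun A f \<longleftrightarrow> arity f \<ge> 1 \<and> pdom f \<subseteq> tuples A (arity f)
      \<and> (\<forall>xs y. snd f xs = Some y \<longrightarrow> y \<in> A)"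

definition P_A :: "'a set \<Rightarrow> 'a pfun set" where "P_A A = {f. is_pfun A f}"
definition O_A :: "'a set \<Rightarrow> 'a pfun set" where
  "O_A A = {f. is_pfun A f \<and> pdom f = tuples A (arity f)}"

definition pcomp :: "'a set \<Rightarrow> 'a pfun \<Rightarrow> nat \<Rightarrow> 'a pfun list \<Rightarrow> 'a pfun" where
  "pcomp A f m gs = (m, \<lambda>xs. if xs \<in> tuples A m \<and> (\<forall>g\<in>set gs. snd g xs \<noteq> None)
       then snd f (map (\<lambda>g. the (snd g xs)) gs) else None)"

definition proj :: "'a set \<Rightarrow> nat \<Rightarrow> nat \<Rightarrow> 'a pfun" where
  "proj A m i = (m, \<lambda>xs. if xs \<in> tuples A m then Some (xs ! i) else None)"

definition partial_clone :: "'a set \<Rightarrow> 'a pfun set \<Rightarrow> bool" where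
  "partial_clone A X \<longleftrightarrow> X \<subseteq> P_A A
     \<and> (\<forall>m i. 1 \<le> m \<and> i < m \<longrightarrow> proj A m i \<in> X)
     \<and> (\<forall>f\<in>X. \<forall>m gs. 1 \<le> m \<and> length gs = arity f \<and> (\<forall>g\<in>set gs. g \<in> X \<and> arity g = m)
            \<longrightarrow> pcomp A f m gs \<in> X)"

definition total_clone :: "'a set \<Rightarrow> 'a pfun set \<Rightarrow> bool" where
  "total_clone A C \<longleftrightarrow> partial_clone A C \<and> C \<subseteq> O_A A"

definition restriction_of :: "'a pfun \<Rightarrow> 'a pfun \<Rightarrow> bool" where
  "restriction_of g f \<longleftrightarrow> arity g = arity f \<and> (\<forall>xs y. snd g xs = Some y \<longrightarrow> snd f xs = Some y)"

definition strong_partial_clone :: "'a set \<Rightarrow> 'a pfun set \<Rightarrow> bool" where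
  "strong_partial_clone A X \<longleftrightarrow> partial_clone A X
     \<and> (\<forall>f\<in>X. \<forall>g. restriction_of g f \<longrightarrow> g \<in> X)"

definition I_str :: "'a set \<Rightarrow> 'a pfun set \<Rightarrow> 'a pfun set set" where
  "I_str A C = {X. strong_partial_clone A X \<and> X \<inter> O_A A = C}"

definition const_fun :: "'a set \<Rightarrow> 'a \<Rightarrow> 'a pfun" where
  "const_fun A a = (1, \<lambda>xs. if xs \<in> tuples A 1 then Some a else None)"

definition fix_first :: "'a pfun \<Rightarrow> 'a \<Rightarrow> 'a pfun" where
  "fix_first f a = (Suc (arity f), \<lambda>ys. case ys of [] \<Rightarrow> None
       | b # xs \<Rightarrow> if b = a then snd f xs else None)"

end

theory Submission
  imports Defs
begin

lemma map_nth_Suc: "map (\<lambda>i. (a#xs) ! Suc i) [0..<length xs] = xs"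
  by (simp add: map_nth)

theorem mainTheorem14:
  fixes A :: "'a set" and C X :: "'a pfun set" and a :: 'a and f :: "'a pfun"
  assumes "finite A"
    and "total_clone A C"
    and "a \<in> A"
    and "const_fun A a \<in> C"
    and "X \<in> I_str A C"
    and "f \<in> P_A A"
  shows "f \<in> X \<longleftrightarrow> fix_first f a \<in> X"
proof -
  have sc: "strong_partial_clone A X" and XC: "X \<inter> O_A A = C" using assms(5) by (auto simp: I_str_def)
  hence pc: "partial_clone A X" by (simp add: strong_partial_clone_def)
  have projX: "\<And>m i. 1 \<le> m \<Longrightarrow> i < m \<Longrightarrow> proj A m i \<in> X" using pc by (simp add: partial_clone_def)
  have compX: "\<And>h m gs. h \<in> X \<Longrightarrow> 1 \<le> m \<Longrightarrow> length gs = arity h \<Longrightarrow> (\<forall>g\<in>set gs. g \<in> X \<and> arity g = m)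
            \<Longrightarrow> pcomp A h m gs \<in> X" using pc unfolding partial_clone_def by blast
  have restrX: "\<And>h g. h \<in> X \<Longrightarrow> restriction_of g h \<Longrightarrow> g \<in> X" using sc
    unfolding strong_partial_clone_def by blast
  obtain n g where fng: "f = (n, g)" by (cases f)
  have pf: "is_pfun A f" using assms(6) by (simp add: P_A_def)
  have n1: "n \<ge> 1" using pf by (simp add: is_pfun_def arity_def fng)
  have dom: "\<And>xs y. g xs = Some y \<Longrightarrow> xs \<in> tuples A n"
    using pf by (auto simp: is_pfun_def arity_def pdom_def fng)
  have domN: "\<And>xs. xs \<notin> tuples A n \<Longrightarrow> g xs = None"
    using dom by (meson not_None_eq)
  show ?thesis
  proof
    assume fX: "f \<in> X"
    define gs where "gs = map (\<lambda>i. proj A (Suc n) (Suc i)) [0..<n]"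
    have GX: "pcomp A f (Suc n) gs \<in> X"
      by (rule compX[OF fX]) (auto simp: gs_def fng projX, auto simp: arity_def proj_def)
    have "restriction_of (fix_first f a) (pcomp A f (Suc n) gs)"
      unfolding restriction_of_def
    proof (intro conjI allI impI)
      show "arity (fix_first f a) = arity (pcomp A f (Suc n) gs)"
        by (simp add: fix_first_def pcomp_def arity_def fng)
    next
      fix ys y assume h: "snd (fix_first f a) ys = Some y"
      then obtain xs where ys: "ys = a # xs" and gx: "g xs = Some y"
        by (auto simp: fix_first_def fng split: list.splits if_splits)
      have xt: "xs \<in> tuples A n" using dom gx .
      hence yt: "ys \<in> tuples A (Suc n)" using assms(3) by (auto simp: tuples_def ys)
      have ln: "length xs = n" using xt by (simp add: tuples_def)
      have "map (\<lambda>p. the (snd p ys)) gs = xs"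
      proof -
        have "map (\<lambda>p. the (snd p ys)) gs = map (\<lambda>i. (a#xs) ! Suc i) [0..<length xs]"
          using yt ln by (simp add: gs_def proj_def ys)
        thus ?thesis by (simp only: map_nth_Suc)
      qed
      thus "snd (pcomp A f (Suc n) gs) ys = Some y"
        using yt gx by (simp add: pcomp_def gs_def proj_def fng)
    qed
    thus "fix_first f a \<in> X" using restrX GX by blast
  next
    assume FX: "fix_first f a \<in> X"
    define cn where "cn = pcomp A (const_fun A a) n [proj A n 0]"
    have cX: "const_fun A a \<in> X" using assms(4) XC by blast
    have cnX: "cn \<in> X" unfolding cn_def
      by (rule compX[OF cX n1]) (use projX[OF n1, of 0] n1 in \<open>auto simp: const_fun_def arity_def proj_def\<close>)
    define gs where "gs = cn # map (proj A n) [0..<n]"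
    have HX: "pcomp A (fix_first f a) n gs \<in> X"
    proof (rule compX[OF FX n1])
      show "length gs = arity (fix_first f a)" by (simp add: gs_def fix_first_def arity_def fng)
      have "arity cn = n" by (simp add: cn_def pcomp_def arity_def)
      moreover have "\<forall>i<n. arity (proj A n i) = n" by (simp add: proj_def arity_def)
      ultimately show "\<forall>g\<in>set gs. g \<in> X \<and> arity g = n"
        using cnX projX n1 by (auto simp: gs_def)
    qed
    have "pcomp A (fix_first f a) n gs = f"
    proof -
      have "\<And>xs. snd (pcomp A (fix_first f a) n gs) xs = g xs"
      proof -
        fix xs
        show "snd (pcomp A (fix_first f a) n gs) xs = g xs"
        proof (cases "xs \<in> tuples A n")
          case True
          have ln: "length xs = n" using True by (simp add: tuples_def)
          have x0: "xs ! 0 \<in> A" using True n1 unfolding tuples_def by (metis (mono_tags) One_nat_def Suc_le_eq mem_Collect_eq nth_mem subsetD)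
          have t1: "[xs ! 0] \<in> tuples A 1" using x0 by (simp add: tuples_def)
          have cnv: "snd cn xs = Some a"
            using True t1 by (simp add: cn_def pcomp_def proj_def const_fun_def)
          have "map (\<lambda>p. the (snd p xs)) gs = a # xs"
          proof -
            have "map ((\<lambda>p. the (snd p xs)) \<circ> proj A n) [0..<n] = map (\<lambda>i. xs ! i) [0..<length xs]"
              using True ln by (simp add: proj_def)
            thus ?thesis using cnv by (simp add: gs_def map_nth)
          qed
          thus ?thesis using True cnv
            by (simp add: pcomp_def gs_def proj_def fix_first_def fng)
        next
          case False
          thus ?thesis using domN by (simp add: pcomp_def)
        qed
      qed
      thus ?thesis by (simp add: fng pcomp_def)
    qed
    thus "f \<in> X" using HX by simp
  qed
qed

end
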